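(* Let $\mathcal{M}$ be a finite $\mathcal{R}$-trivial monoid, let $E_1,\dots,E_p\in\mathbb{Z}\mathcal{M}$ be the complete system of primitive orthogonal idempotents produced by the algorithm described in the context, and let $R$ be a ring with $1\ne0$ having a complete system of primitive orthogonal idempotents $\epsilon_1,\dots,\epsilon_q\in R$. Let $\Theta:\mathbb{Z}\mathcal{M}\to R\mathcal{M}$ be the ring homomorphism $\Theta(\sum_\sigma r_\sigma\cdot\sigma)=\sum_\sigma\theta(r_\sigma)\cdot\sigma$, where $\theta:\mathbb{Z}\to R$ is the unique unital ring homomorphism, and set $\overline{E}_j:=\Theta(E_j)$. Then the elements $\epsilon_i\overline{E}_j$, $i=1,\dots,q$, $j=1,\dots,p$, form a complete system of primitive orthogonal idempotents of $R\mathcal{M}$.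
   Context: $\mathcal{M}$ is $\mathcal{R}$-trivial: $\sigma\mathcal{M}=\tau\mathcal{M}$ implies $\sigma=\tau$; unit $e$, $n=\#\mathcal{M}$. $R$ is an arbitrary (possibly noncommutative) ring with $1\ne0$; $R\mathcal{M}$ is the monoid algebra of formal sums $\sum_\mu r_\mu\cdot\mu$ with $(\sum_\sigma r_\sigma\cdot\sigma)(\sum_\tau s_\tau\cdot\tau)=\sum_\mu(\sum_{\sigma\tau=\mu}r_\sigma s_\tau)\cdot\mu$, and $r\in R$ identified with $r\cdot e$. A complete system of primitive orthogonal idempotents of a ring $A$ is a finite set of nonzero $E_1,\dots,E_p\in A$ with $E_i^2=E_i$, $E_iE_j=0$ for $i\ne j$, each $E_i$ primitive (if $E_i=X+Y$ with $X,Y\in A$, $X^2=X$, $Y^2=Y$, $XY=YX=0$ then $X=0$ or $Y=0$), and $\sum_iE_i=1_A$. The algorithm: fix a generating set $\mathcal{S}$ of $\mathcal{M}$; let $\mathcal{L}_\sigma:=\{\tau:\sigma\tau=\sigma\}$, $\mathcal{L}^{\mathcal{S}}_\sigma:=\mathcal{L}_\sigma\cap\mathcal{S}$; let $\sigma_1,\dots,\sigma_p$ represent the distinct sets $\mathcal{L}^{\mathcal{S}}_\sigma$ and $d_i:=\#\{\sigma:\mathcal{L}^{\mathcal{S}}_\sigma=\mathcal{L}^{\mathcal{S}}_{\sigma_i}\}$; set $T_i:=\prod_{\tau\in\mathcal{L}^{\mathcal{S}}_{\sigma_i}}\tau\prod_{\kappa\in\mathcal{S}\setminus\mathcal{L}^{\mathcal{S}}_{\sigma_i}}(e-\kappa)\in\mathbb{Z}\mathcal{M}$;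 with $\mathcal{P}_{a,b}(X):=e-(e-X^a)^b$, set $E_1:=\mathcal{P}_{a_1,b_1}(T_1)$ and recursively $Q_m:=T_m-\sum_{i<m}T_mE_i-\sum_{i<m}E_iT_m+\sum_{i,j<m}E_iT_mE_j$, $E_m:=\mathcal{P}_{a_m,b_m}(Q_m)$, where $a_m\ge n-d_m$ and $b_m\ge d_m$ are arbitrary nonnegative integers. *)

theory Defs
  imports Main
begin

text \<open>Elements of R M are the functions M \<Rightarrow> R (all finitely supported as M is finite).\<close>

type_synonym ('m, 'r) malg = "'m \<Rightarrow> 'r"

definition malg_add :: "('m, 'r::ring_1) malg \<Rightarrow> ('m, 'r) malg \<Rightarrow> ('m, 'r) malg" where
  "malg_add f g = (\<lambda>\<mu>. f \<mu> + g \<mu>)"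

definition malg_diff :: "('m, 'r::ring_1) malg \<Rightarrow> ('m, 'r) malg \<Rightarrow> ('m, 'r) malg" where
  "malg_diff f g = (\<lambda>\<mu>. f \<mu> - g \<mu>)"

definition malg_zero :: "('m, 'r::ring_1) malg" where
  "malg_zero = (\<lambda>\<mu>. 0)"

definition malg_sum :: "('i \<Rightarrow> ('m, 'r::ring_1) malg) \<Rightarrow> 'i set \<Rightarrow> ('m, 'r) malg" where
  "malg_sum F I = (\<lambda>\<mu>. \<Sum>i\<in>I. F i \<mu>)"

definition malg_mult :: "('m::{monoid_mult,finite}, 'r::ring_1) malg \<Rightarrow> ('m, 'r) malg \<Rightarrow> ('m, 'r) malg" where
  "malg_mult f g = (\<lambda>\<mu>. \<Sum>p\<in>{p. fst p * snd p = \<mu>}. f (fst p) * g (snd p))"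

definition malg_single :: "'r::ring_1 \<Rightarrow> 'm::monoid_mult \<Rightarrow> ('m, 'r) malg" where
  "malg_single r \<sigma> = (\<lambda>\<mu>. if \<mu> = \<sigma> then r else 0)"

definition malg_const :: "'r::ring_1 \<Rightarrow> ('m::monoid_mult, 'r) malg" where
  "malg_const r = malg_single r 1"

definition malg_one :: "('m::monoid_mult, 'r::ring_1) malg" where
  "malg_one = malg_const 1"

definition malg_pow :: "('m::{monoid_mult,finite}, 'r::ring_1) malg \<Rightarrow> nat \<Rightarrow> ('m, 'r) malg" where
  "malg_pow X n = ((malg_mult X) ^^ n) malg_one"

definition malg_prod_list :: "('m::{monoid_mult,finite}, 'r::ring_1) malg list \<Rightarrow> ('m, 'r) malg" where
  "malg_prod_list xs = foldr malg_mult xs malg_one"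

text \<open>Theta : Z M \<rightarrow> R M induced by the unique unital ring hom theta = of_int : Z \<rightarrow> R.\<close>
definition Theta :: "('m, int) malg \<Rightarrow> ('m, 'r::ring_1) malg" where
  "Theta f = (\<lambda>\<mu>. of_int (f \<mu>))"

definition primitive_idem_ring :: "'r::ring_1 \<Rightarrow> bool" where
  "primitive_idem_ring E \<longleftrightarrow>
     (\<forall>X Y. E = X + Y \<and> X * X = X \<and> Y * Y = Y \<and> X * Y = 0 \<and> Y * X = 0 \<longrightarrow> X = 0 \<or> Y = 0)"

definition cpoi_ring :: "'i set \<Rightarrow> ('i \<Rightarrow> 'r::ring_1) \<Rightarrow> bool" where
  "cpoi_ring I E \<longleftrightarrow> finite I \<and>
     (\<forall>i\<in>I. E i \<noteq> 0 \<and> E i * E i = E i \<and> primitive_idem_ring (E i)) \<and>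
     (\<forall>i\<in>I. \<forall>j\<in>I. i \<noteq> j \<longrightarrow> E i * E j = 0) \<and>
     (\<Sum>i\<in>I. E i) = 1"

definition primitive_idem_malg :: "('m::{monoid_mult,finite}, 'r::ring_1) malg \<Rightarrow> bool" where
  "primitive_idem_malg E \<longleftrightarrow>
     (\<forall>X Y. E = malg_add X Y \<and> malg_mult X X = X \<and> malg_mult Y Y = Y \<and>
            malg_mult X Y = malg_zero \<and> malg_mult Y X = malg_zero \<longrightarrow> X = malg_zero \<or> Y = malg_zero)"

definition cpoi_malg :: "'i set \<Rightarrow> ('i \<Rightarrow> ('m::{monoid_mult,finite}, 'r::ring_1) malg) \<Rightarrow> bool" where
  "cpoi_malg I E \<longleftrightarrow> finite I \<and>
     (\<forall>i\<in>I. E i \<noteq> malg_zero \<and> malg_mult (E i) (E i) = E i \<and> primitive_idem_malg (E i)) \<and>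
     (\<forall>i\<in>I. \<forall>j\<in>I. i \<noteq> j \<longrightarrow> malg_mult (E i) (E j) = malg_zero) \<and>
     malg_sum E I = malg_one"

definition R_trivial :: "'m::monoid_mult itself \<Rightarrow> bool" where
  "R_trivial _ \<longleftrightarrow> (\<forall>\<sigma> \<tau> :: 'm. range ((*) \<sigma>) = range ((*) \<tau>) \<longrightarrow> \<sigma> = \<tau>)"

inductive_set generated :: "'m::monoid_mult set \<Rightarrow> 'm set" for S where
  gen_one: "1 \<in> generated S"
| gen_mult: "x \<in> generated S \<Longrightarrow> s \<in> S \<Longrightarrow> x * s \<in> generated S"

definition Lset :: "'m::monoid_mult \<Rightarrow> 'm set" where
  "Lset \<sigma> = {\<tau>. \<sigma> * \<tau> = \<sigma>}"

definition LS :: "'m::monoid_mult set \<Rightarrow> 'm \<Rightarrow> 'm set" where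
  "LS S \<sigma> = Lset \<sigma> \<inter> S"

definition Ppoly :: "nat \<Rightarrow> nat \<Rightarrow> ('m::{monoid_mult,finite}, 'r::ring_1) malg \<Rightarrow> ('m, 'r) malg" where
  "Ppoly a b X = malg_diff malg_one (malg_pow (malg_diff malg_one (malg_pow X a)) b)"

text \<open>Q_m computed from T_m and the previous idempotents E_0, ..., E_{m-1} (list Es).\<close>
definition Qstep :: "('m::{monoid_mult,finite}, 'r::ring_1) malg list \<Rightarrow> ('m, 'r) malg \<Rightarrow> ('m, 'r) malg" where
  "Qstep Es T = malg_add
      (malg_diff (malg_diff T (malg_sum (\<lambda>i. malg_mult T (Es ! i)) {..<length Es}))
                 (malg_sum (\<lambda>i. malg_mult (Es ! i) T) {..<length Es}))
      (malg_sum (\<lambda>(i,j). malg_mult (malg_mult (Es ! i) T) (Es ! j)) ({..<length Es} \<times> {..<length Es}))"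

text \<open>Es T a b m = [E_0, ..., E_{m-1}] (0-based indexing).\<close>
primrec Es :: "(nat \<Rightarrow> ('m::{monoid_mult,finite}, 'r::ring_1) malg) \<Rightarrow> (nat \<Rightarrow> nat) \<Rightarrow> (nat \<Rightarrow> nat)
               \<Rightarrow> nat \<Rightarrow> ('m, 'r) malg list" where
  "Es T a b 0 = []"
| "Es T a b (Suc m) = Es T a b m @ [Ppoly (a m) (b m) (Qstep (Es T a b m) (T m))]"

definition algE :: "(nat \<Rightarrow> ('m::{monoid_mult,finite}, 'r::ring_1) malg) \<Rightarrow> (nat \<Rightarrow> nat) \<Rightarrow> (nat \<Rightarrow> nat)
               \<Rightarrow> nat \<Rightarrow> ('m, 'r) malg" where
  "algE T a b m = Es T a b (Suc m) ! m"

definition Tgen :: "'m::{monoid_mult,finite} list \<Rightarrow> 'm list \<Rightarrow> ('m, int) malg" where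
  "Tgen ls ks = malg_mult (malg_prod_list (map (malg_single 1) ls))
                          (malg_prod_list (map (\<lambda>\<kappa>. malg_diff malg_one (malg_single 1 \<kappa>)) ks))"

end

theory Submission
  imports Defs
begin

typedef ('m, 'r) MA = "UNIV :: ('m \<Rightarrow> 'r) set" morphisms coef MA by auto

lemma MA_inv[simp]: "coef (MA f) = f" by (simp add: MA_inverse)
lemma MA_eqI: "(\<And>\<mu>. coef f \<mu> = coef g \<mu>) \<Longrightarrow> f = g"
  by (metis coef_inverse ext)
lemma MA_inj: "(MA f = MA g) = (f = g)" by (simp add: MA_inject)

definition conv :: "('m::monoid_mult \<Rightarrow> 'r::ring_1) \<Rightarrow> ('m \<Rightarrow> 'r) \<Rightarrow> 'm \<Rightarrow> 'r" where
  "conv f g = (\<lambda>\<mu>. \<Sum>\<sigma>\<in>UNIV. \<Sum>\<tau>\<in>UNIV. if \<sigma> * \<tau> = \<mu> then f \<sigma> * g \<tau> else 0)"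

lemma sum_collapse_eq:
  fixes F :: "'m::finite \<Rightarrow> 'r::ring_1"
  shows "(\<Sum>p\<in>UNIV. if k = p \<and> Q p then F p else 0) = (if Q k then F k else 0)"
proof -
  have "(\<Sum>p\<in>UNIV. if k = p \<and> Q p then F p else 0) = (\<Sum>p\<in>UNIV. if k = p then (if Q k then F k else 0) else 0)"
    by (rule sum.cong) auto
  also have "\<dots> = (if Q k then F k else 0)" by (simp add: sum.delta)
  finally show ?thesis .
qed

lemma swap3:
  fixes F :: "'a::finite \<Rightarrow> 'b::finite \<Rightarrow> 'c::finite \<Rightarrow> 'r::comm_monoid_add"
  shows "(\<Sum>p\<in>UNIV. \<Sum>a\<in>UNIV. \<Sum>b\<in>UNIV. F p a b) = (\<Sum>a\<in>UNIV. \<Sum>b\<in>UNIV. \<Sum>p\<in>UNIV. F p a b)"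
proof -
  have "(\<Sum>p\<in>UNIV. \<Sum>a\<in>UNIV. \<Sum>b\<in>UNIV. F p a b) = (\<Sum>a\<in>UNIV. \<Sum>p\<in>UNIV. \<Sum>b\<in>UNIV. F p a b)"
    by (rule sum.swap)
  also have "\<dots> = (\<Sum>a\<in>UNIV. \<Sum>b\<in>UNIV. \<Sum>p\<in>UNIV. F p a b)"
    by (rule sum.cong[OF refl], rule sum.swap)
  finally show ?thesis .
qed

lemma conv_assoc:
  fixes f g h :: "'m::{monoid_mult,finite} \<Rightarrow> 'r::ring_1"
  shows "conv (conv f g) h = conv f (conv g h)"
proof (rule ext)
  fix \<mu>
  have "conv (conv f g) h \<mu> = (\<Sum>p\<in>UNIV. \<Sum>c\<in>UNIV. \<Sum>a\<in>UNIV. \<Sum>b\<in>UNIV. if a*b = p \<and> p*c = \<mu> then f a * g b * h c else 0)"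
    unfolding conv_def by (auto simp: sum_distrib_right intro!: sum.cong)
  also have "\<dots> = (\<Sum>c\<in>UNIV. \<Sum>a\<in>UNIV. \<Sum>b\<in>UNIV. \<Sum>p\<in>UNIV. if a*b = p \<and> p*c = \<mu> then f a * g b * h c else 0)"
    apply (rule trans[OF sum.swap]) apply (rule sum.cong[OF refl])
    by (rule swap3)
  also have "\<dots> = (\<Sum>c\<in>UNIV. \<Sum>a\<in>UNIV. \<Sum>b\<in>UNIV. if a*b*c = \<mu> then f a * g b * h c else 0)"
    by (subst sum_collapse_eq) simp
  finally have L: "conv (conv f g) h \<mu> = \<dots>" .
  have "conv f (conv g h) \<mu> = (\<Sum>a\<in>UNIV. \<Sum>q\<in>UNIV. \<Sum>b\<in>UNIV. \<Sum>c\<in>UNIV. if b*c = q \<and> a*q = \<mu> then f a * g b * h c else 0)"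
    unfolding conv_def by (auto simp: sum_distrib_left mult.assoc intro!: sum.cong)
  also have "\<dots> = (\<Sum>a\<in>UNIV. \<Sum>b\<in>UNIV. \<Sum>c\<in>UNIV. \<Sum>q\<in>UNIV. if b*c = q \<and> a*q = \<mu> then f a * g b * h c else 0)"
    apply (rule sum.cong[OF refl])
    by (rule swap3)
  also have "\<dots> = (\<Sum>a\<in>UNIV. \<Sum>b\<in>UNIV. \<Sum>c\<in>UNIV. if a*(b*c) = \<mu> then f a * g b * h c else 0)"
    by (subst sum_collapse_eq) simp
  also have "\<dots> = (\<Sum>c\<in>UNIV. \<Sum>a\<in>UNIV. \<Sum>b\<in>UNIV. if a*b*c = \<mu> then f a * g b * h c else 0)"
    by (subst swap3) (simp add: mult.assoc)
  finally show "conv (conv f g) h \<mu> = conv f (conv g h) \<mu>" using L by simp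
qed

instantiation MA :: (type, ab_group_add) ab_group_add
begin
definition "zero_MA = MA (\<lambda>_. 0)"
definition "plus_MA f g = MA (\<lambda>\<mu>. coef f \<mu> + coef g \<mu>)"
definition "minus_MA f g = MA (\<lambda>\<mu>. coef f \<mu> - coef g \<mu>)"
definition "uminus_MA f = MA (\<lambda>\<mu>. - coef f \<mu>)"
instance
  by standard (auto intro!: MA_eqI simp: zero_MA_def plus_MA_def minus_MA_def uminus_MA_def algebra_simps)
end

lemma coef_zero[simp]: "coef 0 \<mu> = 0" by (simp add: zero_MA_def)
lemma coef_plus[simp]: "coef (f + g) \<mu> = coef f \<mu> + coef g \<mu>" by (simp add: plus_MA_def)
lemma coef_minus[simp]: "coef (f - g) \<mu> = coef f \<mu> - coef g \<mu>" by (simp add: minus_MA_def)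
lemma coef_uminus[simp]: "coef (- f) \<mu> = - coef f \<mu>" by (simp add: uminus_MA_def)
lemma coef_sum: "coef (sum F I) \<mu> = (\<Sum>i\<in>I. coef (F i) \<mu>)"
  by (induct I rule: infinite_finite_induct) auto

lemma if_add0: "(if P then (x::'a::monoid_add) + y else 0) = (if P then x else 0) + (if P then y else 0)" by simp

lemma conv_one_left:
  fixes f :: "'m::{monoid_mult,finite} \<Rightarrow> 'r::ring_1"
  shows "conv (\<lambda>\<mu>. if \<mu> = 1 then 1 else 0) f = f"
proof (rule ext)
  fix \<mu>
  have "\<And>\<sigma>. (\<Sum>\<tau>\<in>UNIV. if \<sigma> * \<tau> = \<mu> then (if \<sigma> = 1 then 1 else 0) * f \<tau> else 0) = (if \<sigma> = 1 then f \<mu> else 0)"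
    by (auto simp: sum.delta' cong: if_cong)
  thus "conv (\<lambda>\<mu>. if \<mu> = 1 then 1 else 0) f \<mu> = f \<mu>" unfolding conv_def by (simp add: sum.delta)
qed

lemma conv_one_right_aux:
  fixes f :: "'m::{monoid_mult,finite} \<Rightarrow> 'r::ring_1"
  shows "(\<Sum>\<tau>\<in>UNIV. if \<sigma> * \<tau> = \<mu> then f \<sigma> * (if \<tau> = 1 then 1 else 0) else 0) = (if \<sigma> = \<mu> then f \<mu> else 0)"
proof -
  have "(\<Sum>\<tau>\<in>UNIV. if \<sigma> * \<tau> = \<mu> then f \<sigma> * (if \<tau> = 1 then 1 else 0) else 0) = (\<Sum>\<tau>\<in>UNIV. if \<tau> = (1::'m) then (if \<sigma> = \<mu> then f \<mu> else 0) else 0)"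
    by (intro sum.cong) auto
  thus ?thesis by (simp add: sum.delta)
qed

lemma conv_one_right:
  fixes f :: "'m::{monoid_mult,finite} \<Rightarrow> 'r::ring_1"
  shows "conv f (\<lambda>\<mu>. if \<mu> = 1 then 1 else 0) = f"
  unfolding conv_def by (rule ext) (simp add: conv_one_right_aux sum.delta')

lemma conv_distR:
  fixes f g h :: "'m::{monoid_mult,finite} \<Rightarrow> 'r::ring_1"
  shows "conv (\<lambda>\<mu>. f \<mu> + g \<mu>) h = (\<lambda>\<mu>. conv f h \<mu> + conv g h \<mu>)"
  unfolding conv_def by (rule ext) (simp add: distrib_right if_add0 sum.distrib cong: if_cong)

lemma conv_distL:
  fixes f g h :: "'m::{monoid_mult,finite} \<Rightarrow> 'r::ring_1"
  shows "conv h (\<lambda>\<mu>. f \<mu> + g \<mu>) = (\<lambda>\<mu>. conv h f \<mu> + conv h g \<mu>)"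
  unfolding conv_def by (rule ext) (simp add: distrib_left if_add0 sum.distrib cong: if_cong)

instantiation MA :: ("{monoid_mult,finite}", ring_1) ring_1
begin
definition "one_MA = MA (\<lambda>\<mu>. if \<mu> = 1 then 1 else 0)"
definition "times_MA f g = MA (conv (coef f) (coef g))"
instance
proof
  fix a b c :: "('a,'b) MA"
  show "a * b * c = a * (b * c)" by (simp add: times_MA_def conv_assoc)
  show "1 * a = a" by (simp add: times_MA_def one_MA_def conv_one_left coef_inverse)
  show "a * 1 = a" by (simp add: times_MA_def one_MA_def conv_one_right coef_inverse)
  show "(a + b) * c = a * c + b * c"
    by (simp add: times_MA_def conv_distR plus_MA_def)
  show "a * (b + c) = a * b + a * c"
    by (simp add: times_MA_def conv_distL plus_MA_def)
  show "(0::('a,'b) MA) \<noteq> 1"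
  proof
    assume "(0::('a,'b) MA) = 1"
    hence "coef (0::('a,'b) MA) 1 = coef 1 1" by simp
    thus False by (simp add: one_MA_def)
  qed
qed
end

lemma coef_times: "coef (f * g) \<mu> = (\<Sum>\<sigma>\<in>UNIV. \<Sum>\<tau>\<in>UNIV. if \<sigma> * \<tau> = \<mu> then coef f \<sigma> * coef g \<tau> else 0)"
  by (simp add: times_MA_def conv_def)
lemma coef_one: "coef 1 \<mu> = (if \<mu> = 1 then 1 else 0)"
  by (simp add: one_MA_def)


definition cst :: "'r::ring_1 \<Rightarrow> ('m::{monoid_mult,finite}, 'r) MA" where
  "cst r = MA (malg_const r)"

lemma coef_cst: "coef (cst r) \<mu> = (if \<mu> = 1 then r else 0)"
  by (simp add: cst_def malg_const_def malg_single_def)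

lemma MA_add: "MA (malg_add f g) = MA f + MA g"
  by (simp add: malg_add_def plus_MA_def)
lemma MA_diff: "MA (malg_diff f g) = MA f - MA g"
  by (simp add: malg_diff_def minus_MA_def)
lemma MA_zero: "MA malg_zero = 0"
  by (simp add: malg_zero_def zero_MA_def)
lemma MA_one: "(MA malg_one :: ('m::{monoid_mult,finite}, 'r::ring_1) MA) = 1"
  by (simp add: malg_one_def malg_const_def malg_single_def one_MA_def)
lemma MA_sum: "MA (malg_sum F I) = (\<Sum>i\<in>I. MA (F i))"
  by (rule MA_eqI) (simp add: coef_sum malg_sum_def)

lemma MA_mult: "MA (malg_mult f g) = MA f * MA g"
proof -
  have "malg_mult f g = conv f g"
  proof (rule ext)
    fix \<mu>
    have "conv f g \<mu> = (\<Sum>p\<in>UNIV \<times> UNIV. if fst p * snd p = \<mu> then f (fst p) * g (snd p) else 0)"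
      unfolding conv_def by (simp add: sum.cartesian_product case_prod_beta)
    also have "\<dots> = (\<Sum>p\<in>{p \<in> UNIV \<times> UNIV. fst p * snd p = \<mu>}. f (fst p) * g (snd p))"
      by (rule sum.inter_filter[symmetric]) simp
    finally show "malg_mult f g \<mu> = conv f g \<mu>" by (simp add: malg_mult_def)
  qed
  thus ?thesis by (simp add: times_MA_def)
qed

lemma MA_pow: "MA (malg_pow X n) = MA X ^ n"
  by (induct n) (simp_all add: malg_pow_def MA_one MA_mult)

lemma MA_prod_list: "MA (malg_prod_list xs) = prod_list (map MA xs)"
  by (induct xs) (simp_all add: malg_prod_list_def MA_one MA_mult)

lemma MA_Ppoly: "MA (Ppoly a b X) = 1 - (1 - MA X ^ a) ^ b"
  by (simp add: Ppoly_def MA_diff MA_one MA_pow)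

section \<open>R-trivial\<close>

lemma rtriv_mult:
  fixes x :: "'m::monoid_mult"
  assumes R: "R_trivial TYPE('m)"
  shows "(x * (\<alpha> * \<beta>) = x) = (x * \<alpha> = x \<and> x * \<beta> = x)"
proof
  assume h: "x * (\<alpha> * \<beta>) = x"
  have "range ((*) (x * \<alpha>)) = range ((*) x)"
  proof
    show "range ((*) (x * \<alpha>)) \<subseteq> range ((*) x)" by (auto simp: mult.assoc)
    show "range ((*) x) \<subseteq> range ((*) (x * \<alpha>))"
    proof
      fix z assume "z \<in> range ((*) x)"
      then obtain t where "z = x * t" by auto
      hence "z = x * \<alpha> * (\<beta> * t)" using h by (metis mult.assoc)
      thus "z \<in> range ((*) (x * \<alpha>))" by auto
    qed
  qed
  hence "x * \<alpha> = x" using R unfolding R_trivial_def by blast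
  moreover have "x * \<beta> = x" using h calculation by (metis mult.assoc)
  ultimately show "x * \<alpha> = x \<and> x * \<beta> = x" by simp
next
  assume "x * \<alpha> = x \<and> x * \<beta> = x"
  thus "x * (\<alpha> * \<beta>) = x" by (metis mult.assoc)
qed

definition chi :: "'m::{monoid_mult,finite} \<Rightarrow> ('m, 'r::ring_1) MA \<Rightarrow> 'r" where
  "chi x f = (\<Sum>\<sigma>\<in>UNIV. if x * \<sigma> = x then coef f \<sigma> else 0)"

lemma chi_add: "chi x (f + g) = chi x f + chi x g"
  by (simp add: chi_def if_add0 sum.distrib cong: if_cong)
lemma chi_diff: "chi x (f - g) = chi x f - chi x g"
proof -
  have "chi x (f - g) = (\<Sum>\<sigma>\<in>UNIV. (if x * \<sigma> = x then coef f \<sigma> else 0) - (if x * \<sigma> = x then coef g \<sigma> else 0))"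
    unfolding chi_def by (intro sum.cong) auto
  thus ?thesis by (simp add: chi_def sum_subtractf)
qed
lemma chi_zero: "chi x 0 = 0" by (simp add: chi_def cong: if_cong)
lemma chi_sum: "chi x (sum F I) = (\<Sum>i\<in>I. chi x (F i))"
  by (induct I rule: infinite_finite_induct) (simp_all add: chi_zero chi_add)
lemma chi_cst: "chi x (cst r :: ('m::{monoid_mult,finite}, 'r::ring_1) MA) = r"
proof -
  have "chi x (cst r :: ('m, 'r) MA) = (\<Sum>\<sigma>\<in>UNIV. if \<sigma> = (1::'m) then r else 0)"
    unfolding chi_def by (intro sum.cong) (auto simp: coef_cst)
  thus ?thesis by (simp add: sum.delta)
qed
lemma chi_one: "chi x (1::('m::{monoid_mult,finite}, 'r::ring_1) MA) = 1"
proof -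
  have "chi x (1::('m, 'r) MA) = (\<Sum>\<sigma>\<in>UNIV. if \<sigma> = (1::'m) then 1 else 0)"
    unfolding chi_def by (intro sum.cong) (auto simp: coef_one)
  thus ?thesis by (simp add: sum.delta)
qed

lemma chi_mult:
  fixes f g :: "('m::{monoid_mult,finite}, 'r::ring_1) MA"
  assumes R: "R_trivial TYPE('m)"
  shows "chi x (f * g) = chi x f * chi x g"
proof -
  have "chi x (f * g) = (\<Sum>\<mu>\<in>UNIV. \<Sum>\<sigma>\<in>UNIV. \<Sum>\<tau>\<in>UNIV. if \<sigma> * \<tau> = \<mu> \<and> x * \<mu> = x then coef f \<sigma> * coef g \<tau> else 0)"
    unfolding chi_def coef_times by (intro sum.cong) auto
  also have "\<dots> = (\<Sum>\<sigma>\<in>UNIV. \<Sum>\<tau>\<in>UNIV. \<Sum>\<mu>\<in>UNIV. if \<sigma> * \<tau> = \<mu> \<and> x * \<mu> = x then coef f \<sigma> * coef g \<tau> else 0)"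
    by (rule swap3)
  also have "\<dots> = (\<Sum>\<sigma>\<in>UNIV. \<Sum>\<tau>\<in>UNIV. if x * (\<sigma> * \<tau>) = x then coef f \<sigma> * coef g \<tau> else 0)"
    by (subst sum_collapse_eq) simp
  also have "\<dots> = (\<Sum>\<sigma>\<in>UNIV. \<Sum>\<tau>\<in>UNIV. (if x * \<sigma> = x then coef f \<sigma> else 0) * (if x * \<tau> = x then coef g \<tau> else 0))"
    by (intro sum.cong) (auto simp: rtriv_mult[OF R])
  also have "\<dots> = chi x f * chi x g"
    unfolding chi_def by (simp add: sum_product)
  finally show ?thesis .
qed

lemma chi_pow:
  fixes f :: "('m::{monoid_mult,finite}, 'r::ring_1) MA"
  assumes R: "R_trivial TYPE('m)"
  shows "chi x (f ^ n) = chi x f ^ n"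
  by (induct n) (simp_all add: chi_one chi_mult[OF R])

lemma chi_prod_list:
  fixes fs :: "('m::{monoid_mult,finite}, 'r::ring_1) MA list"
  assumes R: "R_trivial TYPE('m)"
  shows "chi x (prod_list fs) = prod_list (map (chi x) fs)"
  by (induct fs) (simp_all add: chi_one chi_mult[OF R])


lemma chi_LS_aux:
  fixes x y :: "'m::monoid_mult"
  assumes R: "R_trivial TYPE('m)" and L: "LS S x = LS S y" and t: "\<tau> \<in> generated S"
  shows "(x * \<tau> = x) = (y * \<tau> = y)"
  using t
proof (induct rule: generated.induct)
  case gen_one then show ?case by simp
next
  case (gen_mult t s)
  have "(x * s = x) = (y * s = y)" using L gen_mult(3) unfolding LS_def Lset_def by blast
  thus ?case using gen_mult(2) by (simp add: rtriv_mult[OF R])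
qed

lemma chi_LS:
  fixes x y :: "'m::{monoid_mult,finite}"
  assumes R: "R_trivial TYPE('m)" and gen: "generated S = UNIV" and L: "LS S x = LS S y"
  shows "chi x f = chi y f"
  unfolding chi_def using chi_LS_aux[OF R L] gen by (intro sum.cong) auto

section \<open>Killing lemma\<close>

definition dc :: "'m::monoid_mult set \<Rightarrow> bool" where
  "dc D \<longleftrightarrow> (\<forall>y\<in>D. \<forall>t. y * t \<in> D)"

lemma exists_maximal:
  fixes D :: "'m::{monoid_mult,finite} set"
  assumes R: "R_trivial TYPE('m)" and ne: "D \<noteq> {}"
  shows "\<exists>x\<in>D. \<forall>y\<in>D. \<forall>t. y * t = x \<longrightarrow> y = x"
proof -
  let ?c = "\<lambda>y::'m. card (range ((*) y))"
  have fin: "finite (?c ` D)" by simp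
  have "Max (?c ` D) \<in> ?c ` D" using ne by (intro Max_in) auto
  then obtain x where x: "x \<in> D" "?c x = Max (?c ` D)" by auto
  have "\<forall>y\<in>D. \<forall>t. y * t = x \<longrightarrow> y = x"
  proof (intro ballI allI impI)
    fix y t assume y: "y \<in> D" and yt: "y * t = x"
    have sub: "range ((*) x) \<subseteq> range ((*) y)"
      using yt by (auto simp: mult.assoc)
    have "?c y \<le> ?c x" using x y by (simp add: Max_ge)
    moreover have "?c x \<le> ?c y" using sub by (intro card_mono) auto
    ultimately have "range ((*) x) = range ((*) y)"
      using sub by (intro card_subset_eq) auto
    thus "y = x" using R unfolding R_trivial_def by metis
  qed
  thus ?thesis using x by blast
qed

lemma supp_step:
  fixes v w :: "('m::{monoid_mult,finite}, 'r::ring_1) MA"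
  assumes D: "dc D" and xD: "x \<in> D" and xmax: "\<forall>y\<in>D. \<forall>t. y * t = x \<longrightarrow> y = x"
    and v: "\<forall>\<mu>. \<mu> \<notin> D \<longrightarrow> coef v \<mu> = 0" and w: "chi x w = 0"
  shows "\<forall>\<mu>. \<mu> \<notin> D - {x} \<longrightarrow> coef (v * w) \<mu> = 0"
proof (intro allI impI)
  fix \<mu> assume mu: "\<mu> \<notin> D - {x}"
  show "coef (v * w) \<mu> = 0"
  proof (cases "\<mu> \<in> D")
    case False
    have "\<And>\<sigma> \<tau>. (if \<sigma> * \<tau> = \<mu> then coef v \<sigma> * coef w \<tau> else 0) = 0"
    proof -
      fix \<sigma> \<tau>
      show "(if \<sigma> * \<tau> = \<mu> then coef v \<sigma> * coef w \<tau> else 0) = 0"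
      proof (cases "\<sigma> \<in> D")
        case True thus ?thesis using D False unfolding dc_def by auto
      next
        case False thus ?thesis using v by auto
      qed
    qed
    thus ?thesis by (simp add: coef_times)
  next
    case True
    hence mx: "\<mu> = x" using mu by auto
    have "\<And>\<sigma>. (\<Sum>\<tau>\<in>UNIV. if \<sigma> * \<tau> = \<mu> then coef v \<sigma> * coef w \<tau> else 0)
             = (if \<sigma> = x then coef v x * chi x w else 0)"
    proof -
      fix \<sigma>
      show "(\<Sum>\<tau>\<in>UNIV. if \<sigma> * \<tau> = \<mu> then coef v \<sigma> * coef w \<tau> else 0)
             = (if \<sigma> = x then coef v x * chi x w else 0)"
      proof (cases "\<sigma> = x")
        case True
        thus ?thesis using mx unfolding chi_def
          by (simp add: sum_distrib_left if_distrib[where f="\<lambda>z. coef v x * z"] cong: if_cong)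
      next
        case False
        have "\<And>\<tau>. (if \<sigma> * \<tau> = \<mu> then coef v \<sigma> * coef w \<tau> else 0) = 0"
        proof -
          fix \<tau>
          show "(if \<sigma> * \<tau> = \<mu> then coef v \<sigma> * coef w \<tau> else 0) = 0"
          proof (cases "\<sigma> \<in> D")
            case True thus ?thesis using xmax False mx by auto
          next
            case False thus ?thesis using v by auto
          qed
        qed
        thus ?thesis using False by simp
      qed
    qed
    thus ?thesis by (simp add: coef_times sum.delta w)
  qed
qed

lemma kill:
  fixes f :: "('m::{monoid_mult,finite}, 'r::ring_1) MA"
  assumes R: "R_trivial TYPE('m)" and f01: "\<forall>x. chi x f = 0 \<or> chi x f = 1"
  shows "dc D \<Longrightarrow> (\<forall>\<mu>. \<mu> \<notin> D \<longrightarrow> coef v \<mu> = 0) \<Longrightarrow> card {x\<in>D. chi x f = 0} \<le> a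
     \<Longrightarrow> card {x\<in>D. chi x f = 1} \<le> b \<Longrightarrow> v * f ^ a * (1 - f) ^ b = 0"
proof (induct "card D" arbitrary: D v a b rule: less_induct)
  case less
  show ?case
  proof (cases "D = {}")
    case True
    hence "v = 0" using less.prems(2) by (intro MA_eqI) auto
    thus ?thesis by simp
  next
    case False
    obtain x where xD: "x \<in> D" and xmax: "\<forall>y\<in>D. \<forall>t. y * t = x \<longrightarrow> y = x"
      using exists_maximal[OF R False] by blast
    define D' where "D' = D - {x}"
    have dc': "dc D'" unfolding D'_def dc_def
    proof (intro ballI allI)
      fix y t assume "y \<in> D - {x}"
      thus "y * t \<in> D - {x}" using less.prems(1) xmax unfolding dc_def by auto
    qed
    have cardlt: "card D' < card D" unfolding D'_def using xD by (intro psubset_card_mono) auto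
    have sets: "\<And>P. {y\<in>D'. P y} = {y\<in>D. P y} - {x}" unfolding D'_def by auto
    have fcomm: "f ^ a * (1 - f) = (1 - f) * f ^ a" for a
      by (rule power_commuting_commutes) (simp add: algebra_simps)
    show ?thesis
    proof (cases "chi x f = 0")
      case True
      have "card {y\<in>D. chi y f = 0} \<ge> 1" using xD True
        by (metis (mono_tags, lifting) One_nat_def Suc_leI card_gt_0_iff empty_iff finite mem_Collect_eq)
      then obtain a' where a: "a = Suc a'" using less.prems(3) by (cases a) auto
      have c0: "card {y\<in>D'. chi y f = 0} \<le> a'" using less.prems(3) xD True a unfolding sets
        by (simp add: card_Diff_singleton)
      have c1: "card {y\<in>D'. chi y f = 1} \<le> b" using less.prems(4) unfolding sets
        by (meson card_Diff1_le finite le_trans)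
      have s: "\<forall>\<mu>. \<mu> \<notin> D' \<longrightarrow> coef (v * f) \<mu> = 0"
        unfolding D'_def using supp_step[OF less.prems(1) xD xmax less.prems(2) True] .
      have "(v * f) * f ^ a' * (1 - f) ^ b = 0"
        using less.hyps[OF cardlt dc' s c0 c1] .
      thus ?thesis using a by (simp add: mult.assoc)
    next
      case False
      hence T: "chi x f = 1" using f01 by blast
      have "card {y\<in>D. chi y f = 1} \<ge> 1" using xD T
        by (metis (mono_tags, lifting) One_nat_def Suc_leI card_gt_0_iff empty_iff finite mem_Collect_eq)
      then obtain b' where b: "b = Suc b'" using less.prems(4) by (cases b) auto
      have c1: "card {y\<in>D'. chi y f = 1} \<le> b'" using less.prems(4) xD T b unfolding sets
        by (simp add: card_Diff_singleton)
      have c0: "card {y\<in>D'. chi y f = 0} \<le> a" using less.prems(3) unfolding sets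
        by (meson card_Diff1_le finite le_trans)
      have w0: "chi x (1 - f) = 0" using T by (simp add: chi_diff chi_one)
      have s: "\<forall>\<mu>. \<mu> \<notin> D' \<longrightarrow> coef (v * (1 - f)) \<mu> = 0"
        unfolding D'_def using supp_step[OF less.prems(1) xD xmax less.prems(2) w0] .
      have "(v * (1 - f)) * f ^ a * (1 - f) ^ b' = 0"
        using less.hyps[OF cardlt dc' s c0 c1] .
      moreover have "v * f ^ a * (1 - f) ^ b = v * ((f ^ a * (1 - f)) * (1 - f) ^ b')"
        using b by (simp add: mult.assoc)
      ultimately show ?thesis by (simp only: fcomm mult.assoc)
    qed
  qed
qed


lemma kill_one:
  fixes f :: "('m::{monoid_mult,finite}, 'r::ring_1) MA"
  assumes R: "R_trivial TYPE('m)" and f01: "\<forall>x. chi x f = 0 \<or> chi x f = 1"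
    and "card {x. chi x f = 0} \<le> a" and "card {x. chi x f = 1} \<le> b"
  shows "f ^ a * (1 - f) ^ b = 0"
proof -
  have "1 * f ^ a * (1 - f) ^ b = 0"
    by (rule kill[OF R f01, of UNIV]) (use assms in \<open>auto simp: dc_def\<close>)
  thus ?thesis by simp
qed

lemma idem_pow: "(e::'a::monoid_mult) * e = e \<Longrightarrow> e ^ Suc n = e"
  by (induct n) (simp_all add: mult.assoc[symmetric])

lemma idem_zero:
  fixes e :: "('m::{monoid_mult,finite}, 'r::ring_1) MA"
  assumes R: "R_trivial TYPE('m)" and idem: "e * e = e" and z: "\<forall>x. chi x e = 0"
  shows "e = 0"
proof -
  have "e ^ card (UNIV::'m set) * (1 - e) ^ 0 = 0"
    by (rule kill_one[OF R]) (use z in auto)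
  moreover have "card (UNIV::'m set) = Suc (card (UNIV::'m set) - 1)"
    using card_gt_0_iff[of "UNIV::'m set"] by simp
  ultimately show ?thesis using idem_pow[OF idem] by (metis mult_1_right power_0)
qed

lemma geoL: "1 - (z::'a::ring_1) ^ n = (1 - z) * (\<Sum>i<n. z ^ i)"
  by (induct n) (simp_all add: algebra_simps)

lemma geoR: "1 - (z::'a::ring_1) ^ n = (\<Sum>i<n. z ^ i) * (1 - z)"
  by (induct n) (simp_all add: algebra_simps power_commutes)

lemma comm_pow: "(x::'a::monoid_mult) * y = y * x \<Longrightarrow> (x * y) ^ n = x ^ n * y ^ n"
proof (induct n)
  case 0 thus ?case by simp
next
  case (Suc n)
  have c: "x ^ n * y = y * x ^ n" using power_commuting_commutes Suc by metis
  have "(x * y) ^ Suc n = x * y * (x ^ n * y ^ n)" using Suc by simp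
  also have "\<dots> = x * (y * x ^ n) * y ^ n" by (simp add: mult.assoc)
  also have "\<dots> = x ^ Suc n * y ^ Suc n" by (simp add: c[symmetric] mult.assoc)
  finally show ?case .
qed

lemma comm_pow2: "(x::'a::monoid_mult) * y = y * x \<Longrightarrow> x ^ m * y ^ n = y ^ n * x ^ m"
proof -
  assume h: "x * y = y * x"
  have "x ^ m * y = y * x ^ m" by (rule power_commuting_commutes[OF h])
  thus ?thesis by (metis power_commuting_commutes)
qed

lemma Pidem:
  fixes y :: "'a::ring_1"
  assumes k: "y ^ a * (1 - y) ^ b = 0"
  shows "(1 - (1 - y ^ a) ^ b) * (1 - (1 - y ^ a) ^ b) = 1 - (1 - y ^ a) ^ b"
proof -
  define h where "h = (\<Sum>i<a. y ^ i)"
  define z where "z = 1 - y ^ a"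
  have zh: "z = (1 - y) * h" unfolding z_def h_def by (rule geoL)
  have hc: "(1 - y) * h = h * (1 - y)" using geoL geoR unfolding h_def by metis
  have hy: "h * y = y * h" unfolding h_def by (simp add: sum_distrib_left sum_distrib_right power_commutes)
  have zb: "z ^ b = (1 - y) ^ b * h ^ b" unfolding zh by (rule comm_pow[OF hc])
  have c1: "h ^ b * y ^ a = y ^ a * h ^ b" by (rule comm_pow2[OF hy])
  have c2: "(1 - y) ^ b * y ^ a = y ^ a * (1 - y) ^ b" by (rule comm_pow2) (simp add: algebra_simps)
  have "z ^ b * y ^ a = (1 - y) ^ b * (h ^ b * y ^ a)" by (simp add: zb mult.assoc)
  also have "\<dots> = ((1 - y) ^ b * y ^ a) * h ^ b" by (simp add: c1 mult.assoc)
  also have "\<dots> = 0" by (simp add: c2 k)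
  finally have zy: "z ^ b * y ^ a = 0" .
  have "1 - z ^ b = (1 - z) * (\<Sum>i<b. z ^ i)" by (rule geoL)
  also have "1 - z = y ^ a" unfolding z_def by simp
  finally have e: "1 - z ^ b = y ^ a * (\<Sum>i<b. z ^ i)" .
  have "z ^ b * (1 - z ^ b) = 0" unfolding e by (simp add: mult.assoc[symmetric] zy)
  hence "z ^ b * z ^ b = z ^ b" by (simp add: algebra_simps)
  hence "(1 - z ^ b) * (1 - z ^ b) = 1 - z ^ b" by (simp add: algebra_simps)
  thus ?thesis unfolding z_def .
qed

lemma Porth:
  fixes y w :: "'a::ring_1"
  assumes a: "0 < a"
  shows "w * y = 0 \<Longrightarrow> w * (1 - (1 - y ^ a) ^ b) = 0"
    and "y * w = 0 \<Longrightarrow> (1 - (1 - y ^ a) ^ b) * w = 0"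
proof -
  define z where "z = 1 - y ^ a"
  have "1 - z ^ b = (1 - z) * (\<Sum>i<b. z ^ i)" by (rule geoL)
  also have "1 - z = y * y ^ (a - 1)" unfolding z_def using a by (cases a) auto
  finally have e1: "1 - z ^ b = y * (y ^ (a - 1) * (\<Sum>i<b. z ^ i))" by (simp add: mult.assoc)
  have "1 - z ^ b = (\<Sum>i<b. z ^ i) * (1 - z)" by (rule geoR)
  also have "1 - z = y ^ (a - 1) * y" unfolding z_def using a by (cases a) (auto simp: power_commutes)
  finally have e2: "1 - z ^ b = ((\<Sum>i<b. z ^ i) * y ^ (a - 1)) * y" by (simp add: mult.assoc)
  show "w * y = 0 \<Longrightarrow> w * (1 - (1 - y ^ a) ^ b) = 0"
    using e1 unfolding z_def by (simp add: mult.assoc[symmetric])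
  show "y * w = 0 \<Longrightarrow> (1 - (1 - y ^ a) ^ b) * w = 0"
    using e2 unfolding z_def by (simp add: mult.assoc)
qed


lemma length_Es: "length (Es T a b m) = m"
  by (induct m) auto

lemma nth_Es: "j < m \<Longrightarrow> Es T a b m ! j = algE T a b j"
proof (induct m)
  case 0 thus ?case by simp
next
  case (Suc m)
  show ?case
  proof (cases "j < m")
    case True thus ?thesis using Suc by (simp add: nth_append length_Es)
  next
    case False hence "j = m" using Suc by simp
    thus ?thesis by (simp add: algE_def)
  qed
qed

lemma algE_eq: "algE T a b m = Ppoly (a m) (b m) (Qstep (Es T a b m) (T m))"
  by (simp add: algE_def nth_append length_Es)

lemma expand4: "(1 - F) * T * (1 - F) = T - T * F - F * T + F * T * (F::'a::ring_1)"
  by (simp add: algebra_simps)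

lemma MA_Qstep:
  fixes L :: "('m::{monoid_mult,finite}, 'r::ring_1) malg list"
  shows "MA (Qstep L T) = (1 - (\<Sum>i<length L. MA (L ! i))) * MA T * (1 - (\<Sum>i<length L. MA (L ! i)))"
proof -
  let ?F = "\<Sum>i<length L. MA (L ! i)"
  have fx: "?F * MA T * ?F = (\<Sum>p\<in>{..<length L} \<times> {..<length L}. MA (L ! fst p) * MA T * MA (L ! snd p))"
  proof -
    have "?F * MA T * ?F = (\<Sum>i<length L. MA (L ! i) * MA T * ?F)" by (simp only: sum_distrib_right)
    also have "\<dots> = (\<Sum>i<length L. \<Sum>j<length L. MA (L ! i) * MA T * MA (L ! j))" by (simp only: sum_distrib_left)
    also have "\<dots> = (\<Sum>p\<in>{..<length L} \<times> {..<length L}. MA (L ! fst p) * MA T * MA (L ! snd p))"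
      by (simp add: sum.cartesian_product case_prod_beta)
    finally show ?thesis .
  qed
  have "MA (Qstep L T) = MA T - (\<Sum>i<length L. MA T * MA (L ! i)) - (\<Sum>i<length L. MA (L ! i) * MA T) + ?F * MA T * ?F"
    unfolding Qstep_def fx by (simp add: MA_add MA_diff MA_sum MA_mult case_prod_beta)
  also have "\<dots> = MA T - MA T * ?F - ?F * MA T + ?F * MA T * ?F"
    by (simp only: sum_distrib_left sum_distrib_right)
  also have "\<dots> = (1 - ?F) * MA T * (1 - ?F)"
    by (rule expand4[symmetric])
  finally show ?thesis .
qed

definition sg :: "'m \<Rightarrow> ('m::{monoid_mult,finite}, 'r::ring_1) MA" where
  "sg \<tau> = MA (malg_single 1 \<tau>)"

lemma chi_sg: "chi x (sg \<tau> :: ('m::{monoid_mult,finite}, 'r::ring_1) MA) = (if x * \<tau> = x then 1 else 0)"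
proof -
  have "chi x (sg \<tau> :: ('m, 'r) MA) = (\<Sum>\<sigma>\<in>UNIV. if \<sigma> = \<tau> then (if x * \<tau> = x then 1 else 0) else 0)"
    unfolding chi_def sg_def by (intro sum.cong) (auto simp: malg_single_def)
  thus ?thesis by (simp add: sum.delta)
qed

lemma chi_1sg: "chi x (1 - sg \<tau> :: ('m::{monoid_mult,finite}, int) MA) = (if x * \<tau> \<noteq> x then 1 else 0)"
  by (simp add: chi_diff chi_one chi_sg)

lemma MA_Tgen: "MA (Tgen ls ks) = prod_list (map sg ls) * prod_list (map (\<lambda>\<kappa>. 1 - sg \<kappa>) ks)"
  by (simp add: Tgen_def MA_mult MA_prod_list o_def MA_diff MA_one sg_def[abs_def])

lemma plist01: "prod_list (map (\<lambda>t. if P t then 1 else 0) xs) = (if \<forall>t\<in>set xs. P t then 1 else (0::int))"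
  by (induct xs) auto

lemma chi_Tgen:
  fixes x :: "'m::{monoid_mult,finite}"
  assumes R: "R_trivial TYPE('m)"
  shows "chi x (MA (Tgen ls ks)) = (if (\<forall>\<tau>\<in>set ls. x * \<tau> = x) \<and> (\<forall>\<kappa>\<in>set ks. x * \<kappa> \<noteq> x) then 1 else 0)"
proof -
  have "chi x (MA (Tgen ls ks)) = prod_list (map (\<lambda>t. if x * t = x then 1 else 0) ls) *
      prod_list (map (\<lambda>t. if x * t \<noteq> x then 1 else 0) ks)"
    unfolding MA_Tgen by (simp add: chi_mult[OF R] chi_prod_list[OF R] o_def chi_1sg chi_sg)
  thus ?thesis by (simp only: plist01) simp
qed

definition th :: "('m, int) MA \<Rightarrow> ('m, 'r::ring_1) MA" where
  "th f = MA (Theta (coef f))"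

lemma coef_th: "coef (th f) \<mu> = of_int (coef f \<mu>)"
  by (simp add: th_def Theta_def)

lemma th_mult: "th (f * g) = (th f * th g :: ('m::{monoid_mult,finite}, 'r::ring_1) MA)"
  by (rule MA_eqI) (simp add: coef_th coef_times of_int_sum if_distrib[where f=of_int] cong: if_cong)
lemma th_one: "th 1 = (1 :: ('m::{monoid_mult,finite}, 'r::ring_1) MA)"
  by (rule MA_eqI) (simp add: coef_th coef_one)
lemma th_zero: "th 0 = (0 :: ('m::{monoid_mult,finite}, 'r::ring_1) MA)"
  by (rule MA_eqI) (simp add: coef_th)
lemma th_sum: "th (sum F I) = (\<Sum>i\<in>I. th (F i) :: ('m::{monoid_mult,finite}, 'r::ring_1) MA)"
  by (rule MA_eqI) (simp add: coef_th coef_sum)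
lemma chi_th: "chi x (th f :: ('m::{monoid_mult,finite}, 'r::ring_1) MA) = of_int (chi x f)"
  by (simp add: chi_def coef_th of_int_sum if_distrib[where f=of_int] cong: if_cong)

lemma delta2: "(\<Sum>\<sigma>\<in>UNIV. \<Sum>\<tau>\<in>UNIV. if \<sigma> = (k::'m::finite) \<and> \<tau> = (l::'n::finite) then c else 0) = (c::'a::comm_monoid_add)"
proof -
  have "\<And>\<sigma>. (\<Sum>\<tau>\<in>UNIV. if \<sigma> = k \<and> \<tau> = l then c else 0) = (if \<sigma> = k then c else 0)"
    by (auto simp: sum.delta)
  thus ?thesis by (simp add: sum.delta)
qed

lemma cst_mult: "cst (r * s) = (cst r * cst s :: ('m::{monoid_mult,finite}, 'r::ring_1) MA)"
proof (rule MA_eqI)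
  fix \<mu>
  have "coef (cst r * cst s :: ('m, 'r) MA) \<mu> = (\<Sum>\<sigma>\<in>UNIV. \<Sum>\<tau>\<in>UNIV. if \<sigma> = (1::'m) \<and> \<tau> = (1::'m) then (if \<mu> = 1 then r * s else 0) else 0)"
    unfolding coef_times by (intro sum.cong) (auto simp: coef_cst)
  thus "coef (cst (r * s) :: ('m, 'r) MA) \<mu> = coef (cst r * cst s :: ('m, 'r) MA) \<mu>"
    by (simp add: coef_cst delta2)
qed
lemma cst_one: "cst 1 = (1 :: ('m::{monoid_mult,finite}, 'r::ring_1) MA)"
  by (rule MA_eqI) (simp add: coef_cst coef_one)
lemma cst_zero: "cst 0 = (0 :: ('m::{monoid_mult,finite}, 'r::ring_1) MA)"
  by (rule MA_eqI) (simp add: coef_cst)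
lemma cst_sum: "cst (sum F I) = (\<Sum>i\<in>I. cst (F i) :: ('m::{monoid_mult,finite}, 'r::ring_1) MA)"
  by (rule MA_eqI) (simp add: coef_cst coef_sum)

lemma coef_cst_mult: "coef (cst r * g :: ('m::{monoid_mult,finite}, 'r::ring_1) MA) \<mu> = r * coef g \<mu>"
proof -
  have "coef (cst r * g :: ('m, 'r) MA) \<mu> = (\<Sum>\<sigma>\<in>UNIV. if \<sigma> = (1::'m) then r * coef g \<mu> else 0)"
    unfolding coef_times
  proof (intro sum.cong refl)
    fix \<sigma> :: 'm
    show "(\<Sum>\<tau>\<in>UNIV. if \<sigma> * \<tau> = \<mu> then coef (cst r) \<sigma> * coef g \<tau> else 0) = (if \<sigma> = 1 then r * coef g \<mu> else 0)"
      by (cases "\<sigma> = 1") (auto simp: coef_cst sum.delta cong: if_cong)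
  qed
  thus ?thesis by (simp add: sum.delta)
qed

lemma coef_mult_cst: "coef (g * cst r :: ('m::{monoid_mult,finite}, 'r::ring_1) MA) \<mu> = coef g \<mu> * r"
proof -
  have "coef (g * cst r :: ('m, 'r) MA) \<mu> = (\<Sum>\<sigma>\<in>UNIV. if \<sigma> = (\<mu>::'m) then coef g \<mu> * r else 0)"
    unfolding coef_times
  proof (intro sum.cong refl)
    fix \<sigma> :: 'm
    have "(\<Sum>\<tau>\<in>UNIV. if \<sigma> * \<tau> = \<mu> then coef g \<sigma> * coef (cst r) \<tau> else 0) = (\<Sum>\<tau>\<in>UNIV. if \<tau> = (1::'m) then (if \<sigma> = \<mu> then coef g \<mu> * r else 0) else 0)"
      by (intro sum.cong) (auto simp: coef_cst)
    thus "(\<Sum>\<tau>\<in>UNIV. if \<sigma> * \<tau> = \<mu> then coef g \<sigma> * coef (cst r) \<tau> else 0) = (if \<sigma> = \<mu> then coef g \<mu> * r else 0)"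
      by (simp add: sum.delta)
  qed
  thus ?thesis by (simp add: sum.delta)
qed

lemma cst_th_comm: "cst r * th f = (th f * cst r :: ('m::{monoid_mult,finite}, 'r::ring_1) MA)"
  by (rule MA_eqI) (simp add: coef_cst_mult coef_mult_cst coef_th mult_of_int_commute)


lemma chi_01: "(\<forall>x. chi x f = (if P x then 1 else 0)) \<Longrightarrow> \<forall>x. chi x f = 0 \<or> chi x f = 1"
  by auto

lemma alg_main:
  fixes S :: "'m::{monoid_mult,finite} set"
    and rs :: "'m list"
    and ls ks :: "nat \<Rightarrow> 'm list"
    and a b :: "nat \<Rightarrow> nat"
  assumes Rtriv: "R_trivial TYPE('m)"
    and gen: "generated S = UNIV"
    and reps_all: "LS S ` set rs = LS S ` UNIV"
    and reps_dist: "distinct (map (LS S) rs)"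
    and ls: "\<And>m. m < length rs \<Longrightarrow> distinct (ls m) \<and> set (ls m) = LS S (rs ! m)"
    and ks: "\<And>m. m < length rs \<Longrightarrow> distinct (ks m) \<and> set (ks m) = S - LS S (rs ! m)"
    and a: "\<And>m. m < length rs \<Longrightarrow>
              a m \<ge> card (UNIV :: 'm set) - card {\<sigma>. LS S \<sigma> = LS S (rs ! m)}"
    and b: "\<And>m. m < length rs \<Longrightarrow> b m \<ge> card {\<sigma>. LS S \<sigma> = LS S (rs ! m)}"
  shows "(\<forall>j<length rs. MA (algE (\<lambda>m. Tgen (ls m) (ks m)) a b j) * MA (algE (\<lambda>m. Tgen (ls m) (ks m)) a b j)
               = (MA (algE (\<lambda>m. Tgen (ls m) (ks m)) a b j) :: ('m, int) MA)
           \<and> (\<forall>x. chi x (MA (algE (\<lambda>m. Tgen (ls m) (ks m)) a b j) :: ('m, int) MA)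
                     = (if LS S x = LS S (rs ! j) then 1 else 0)))
       \<and> (\<forall>i<length rs. \<forall>j<length rs. i \<noteq> j \<longrightarrow>
             MA (algE (\<lambda>m. Tgen (ls m) (ks m)) a b i) * MA (algE (\<lambda>m. Tgen (ls m) (ks m)) a b j) = (0 :: ('m, int) MA))
       \<and> (\<Sum>j<length rs. MA (algE (\<lambda>m. Tgen (ls m) (ks m)) a b j)) = (1 :: ('m, int) MA)"
proof -
  define Tf where "Tf = (\<lambda>m. Tgen (ls m) (ks m))"
  define E where "E = (\<lambda>j. MA (algE Tf a b j) :: ('m, int) MA)"
  define p where "p = length rs"
  define cls where "cls = (\<lambda>x j. LS S x = LS S (rs ! j))"
  have cls_ex: "\<exists>m<p. cls x m" for x
  proof -
    have "LS S x \<in> LS S ` set rs" using reps_all by auto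
    then obtain r where "r \<in> set rs" "LS S x = LS S r" by auto
    thus ?thesis unfolding cls_def p_def by (metis in_set_conv_nth)
  qed
  have cls_uniq: "i = j" if "i < p" "j < p" "cls x i" "cls x j" for x i j
  proof -
    have "map (LS S) rs ! i = map (LS S) rs ! j" using that unfolding cls_def p_def by simp
    thus ?thesis using nth_eq_iff_index_eq[OF reps_dist] that unfolding p_def by simp
  qed
  have chiT: "chi x (MA (Tf m) :: ('m, int) MA) = (if cls x m then 1 else 0)" if "m < p" for x m
  proof -
    have "((\<forall>\<tau>\<in>set (ls m). x * \<tau> = x) \<and> (\<forall>\<kappa>\<in>set (ks m). x * \<kappa> \<noteq> x)) = cls x m"
      using ls[of m] ks[of m] that unfolding cls_def p_def LS_def Lset_def by blast
    thus ?thesis unfolding Tf_def by (simp add: chi_Tgen[OF Rtriv])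
  qed
  have dpos: "card {\<sigma>. cls \<sigma> m} \<ge> 1" if "m < p" for m
  proof -
    have "rs ! m \<in> {\<sigma>. cls \<sigma> m}" unfolding cls_def by simp
    thus ?thesis by (metis One_nat_def Suc_leI card_gt_0_iff empty_iff finite)
  qed
  have apos: "a m \<ge> 1" if "m < p" "\<exists>x. \<not> cls x m" for m
  proof -
    have "card (UNIV - {\<sigma>. cls \<sigma> m}) \<ge> 1" using that(2)
      by (metis Diff_iff One_nat_def Suc_leI UNIV_I card_gt_0_iff empty_iff finite mem_Collect_eq)
    hence "card (UNIV :: 'm set) - card {\<sigma>. cls \<sigma> m} \<ge> 1" by (simp add: card_Diff_subset)
    thus ?thesis using a[of m] that(1) unfolding cls_def p_def by simp
  qed
  have step: "(\<forall>j<m. E j * E j = E j \<and> (\<forall>x. chi x (E j) = (if cls x j then 1 else 0))) \<and>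
              (\<forall>i<m. \<forall>j<m. i \<noteq> j \<longrightarrow> E i * E j = 0)" if "m \<le> p" for m
    using that
  proof (induct m)
    case 0 thus ?case by simp
  next
    case (Suc m)
    hence mp: "m < p" by simp
    have IH1: "\<And>j. j < m \<Longrightarrow> E j * E j = E j" and IHc: "\<And>j x. j < m \<Longrightarrow> chi x (E j) = (if cls x j then 1 else 0)"
      and IH2: "\<And>i j. i < m \<Longrightarrow> j < m \<Longrightarrow> i \<noteq> j \<Longrightarrow> E i * E j = 0"
      using Suc by auto
    define F where "F = (\<Sum>j<m. E j)"
    define Q where "Q = (1 - F) * MA (Tf m) * (1 - F)"
    have EF: "E i * F = E i" if "i < m" for i
    proof -
      have "E i * F = (\<Sum>j<m. if j = i then E i else 0)"
        unfolding F_def sum_distrib_left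
      proof (intro sum.cong refl)
        fix j assume j: "j \<in> {..<m}"
        show "E i * E j = (if j = i then E i else 0)"
          using IH1[of i] IH2[of i j] that j by (cases "j = i") auto
      qed
      thus ?thesis using that by (simp add: sum.delta')
    qed
    have FE: "F * E i = E i" if "i < m" for i
    proof -
      have "F * E i = (\<Sum>j<m. if j = i then E i else 0)"
        unfolding F_def sum_distrib_right
      proof (intro sum.cong refl)
        fix j assume j: "j \<in> {..<m}"
        show "E j * E i = (if j = i then E i else 0)"
          using IH1[of i] IH2[of j i] that j by (cases "j = i") auto
      qed
      thus ?thesis using that by (simp add: sum.delta')
    qed
    have EQ: "E i * Q = 0" if "i < m" for i
    proof -
      have "E i * (1 - F) = 0" using EF[OF that] by (simp add: algebra_simps)
      thus ?thesis unfolding Q_def by (simp add: mult.assoc[symmetric])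
    qed
    have QE: "Q * E i = 0" if "i < m" for i
    proof -
      have "(1 - F) * E i = 0" using FE[OF that] by (simp add: algebra_simps)
      thus ?thesis unfolding Q_def by (simp add: mult.assoc)
    qed
    have Em: "E m = 1 - (1 - Q ^ a m) ^ b m"
    proof -
      have "Qstep (Es Tf a b m) (Tf m) = Qstep (Es Tf a b m) (Tf m)" ..
      have "MA (Qstep (Es Tf a b m) (Tf m)) = Q"
        unfolding MA_Qstep Q_def F_def E_def by (simp add: length_Es nth_Es)
      thus ?thesis unfolding E_def by (simp add: algE_eq MA_Ppoly)
    qed
    have chiF: "chi x F = (if \<exists>j<m. cls x j then 1 else 0)" for x
    proof (cases "\<exists>j<m. cls x j")
      case True
      then obtain j where j: "j < m" "cls x j" by auto
      have "chi x F = (\<Sum>i<m. if i = j then 1 else 0)"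
        unfolding F_def chi_sum
      proof (intro sum.cong refl)
        fix i assume "i \<in> {..<m}"
        hence i: "i < m" by simp
        have "cls x i = (i = j)" using cls_uniq[of i j x] j i mp by (meson less_trans)
        thus "chi x (E i) = (if i = j then 1 else 0)" using IHc[OF i, of x] by simp
      qed
      thus ?thesis using True j by (simp add: sum.delta')
    next
      case False
      thus ?thesis unfolding F_def chi_sum using IHc by simp
    qed
    have chiQ: "\<forall>x. chi x Q = (if cls x m then 1 else 0)"
    proof
      fix x
      show "chi x Q = (if cls x m then 1 else 0)"
      proof (cases "cls x m")
        case True
        hence "\<not> (\<exists>j<m. cls x j)" using cls_uniq[of _ m x] mp by (metis Suc_lessD less_not_refl2 less_trans_Suc)
        thus ?thesis using True unfolding Q_def
          by (simp add: chi_mult[OF Rtriv] chi_diff chi_one chiF chiT[OF mp])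
      next
        case False
        thus ?thesis unfolding Q_def by (simp add: chi_mult[OF Rtriv] chiT[OF mp])
      qed
    qed
    have c0: "card {x. chi x Q = 0} \<le> a m"
    proof -
      have "{x. chi x Q = 0} = UNIV - {\<sigma>. cls \<sigma> m}" using chiQ by auto
      hence "card {x. chi x Q = 0} = card (UNIV :: 'm set) - card {\<sigma>. cls \<sigma> m}"
        by (simp add: card_Diff_subset)
      thus ?thesis using a[OF mp[unfolded p_def]] unfolding cls_def by simp
    qed
    have c1: "card {x. chi x Q = 1} \<le> b m"
    proof -
      have "{x. chi x Q = 1} = {\<sigma>. cls \<sigma> m}" using chiQ by auto
      thus ?thesis using b[OF mp[unfolded p_def]] unfolding cls_def by simp
    qed
    have kq: "Q ^ a m * (1 - Q) ^ b m = 0"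
      by (rule kill_one[OF Rtriv chi_01[OF chiQ] c0 c1])
    have idem: "E m * E m = E m" unfolding Em by (rule Pidem[OF kq])
    have bpos: "b m \<ge> 1" using dpos[OF mp] b[OF mp[unfolded p_def]] unfolding cls_def by simp
    have chiE: "chi x (E m) = (if cls x m then 1 else 0)" for x
    proof (cases "cls x m")
      case True
      thus ?thesis using bpos unfolding Em
        by (simp add: chi_diff chi_one chi_pow[OF Rtriv] chiQ zero_power)
    next
      case False
      have "a m \<ge> 1" using apos[OF mp] False by blast
      thus ?thesis using False unfolding Em
        by (simp add: chi_diff chi_one chi_pow[OF Rtriv] chiQ zero_power)
    qed
    have orth1: "E i * E m = 0" if "i < m" for i
    proof -
      have "cls (rs ! i) i" unfolding cls_def by simp
      moreover have "i < p" using that mp by simp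
      ultimately have "\<not> cls (rs ! i) m" using cls_uniq[of i m "rs ! i"] that mp by auto
      hence "a m \<ge> 1" using apos[OF mp] by blast
      thus ?thesis unfolding Em using Porth(1)[OF _ EQ[OF that]] by simp
    qed
    have orth2: "E m * E i = 0" if "i < m" for i
    proof -
      have "cls (rs ! i) i" unfolding cls_def by simp
      moreover have "i < p" using that mp by simp
      ultimately have "\<not> cls (rs ! i) m" using cls_uniq[of i m "rs ! i"] that mp by auto
      hence "a m \<ge> 1" using apos[OF mp] by blast
      thus ?thesis unfolding Em using Porth(2)[OF _ QE[OF that]] by simp
    qed
    show ?case
    proof (intro conjI allI impI)
      fix j assume "j < Suc m"
      thus "E j * E j = E j" using IH1 idem by (cases "j = m") auto
    next
      fix j x assume "j < Suc m"
      thus "chi x (E j) = (if cls x j then 1 else 0)" using IHc chiE by (cases "j = m") auto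
    next
      fix i j assume "i < Suc m" "j < Suc m" "i \<noteq> j"
      thus "E i * E j = 0" proof (cases "i = m")
        case True thus ?thesis using orth2 \<open>j < Suc m\<close> \<open>i \<noteq> j\<close> by simp
      next
        case False
        show ?thesis
        proof (cases "j = m")
          case True thus ?thesis using orth1 \<open>i < Suc m\<close> \<open>i \<noteq> j\<close> by simp
        next
          case False
          thus ?thesis using IH2 \<open>i \<noteq> m\<close> \<open>i < Suc m\<close> \<open>j < Suc m\<close> \<open>i \<noteq> j\<close> by simp
        qed
      qed
    qed
  qed
  have all1: "\<forall>j<p. E j * E j = E j \<and> (\<forall>x. chi x (E j) = (if cls x j then 1 else 0))"
    by (rule step[OF order_refl, THEN conjunct1])
  have all2: "\<forall>i<p. \<forall>j<p. i \<noteq> j \<longrightarrow> E i * E j = 0"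
    by (rule step[OF order_refl, THEN conjunct2])
  define F where "F = (\<Sum>j<p. E j)"
  have FF: "F * F = F"
  proof -
    have "F * F = (\<Sum>i<p. E i * F)" unfolding F_def by (simp only: sum_distrib_right)
    also have "\<dots> = (\<Sum>i<p. E i)"
    proof (intro sum.cong refl)
      fix i assume i: "i \<in> {..<p}"
      have "E i * F = (\<Sum>j<p. if j = i then E i else 0)"
        unfolding F_def sum_distrib_left
      proof (intro sum.cong refl)
        fix j assume j: "j \<in> {..<p}"
        show "E i * E j = (if j = i then E i else 0)"
        proof (cases "j = i")
          case True thus ?thesis using all1 i by simp
        next
          case False thus ?thesis using all2 i j by simp
        qed
      qed
      thus "E i * F = E i" using i by (simp add: sum.delta')
    qed
    finally show ?thesis unfolding F_def .
  qed
  have chi1F: "\<forall>x. chi x (1 - F) = 0"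
  proof
    fix x
    obtain j where j: "j < p" "cls x j" using cls_ex by blast
    have "chi x F = (\<Sum>i<p. if i = j then 1 else 0)"
      unfolding F_def chi_sum
    proof (intro sum.cong refl)
      fix i assume "i \<in> {..<p}"
      hence i: "i < p" by simp
      have "chi x (E i) = (if cls x i then 1 else 0)" using all1 i by simp
      moreover have "cls x i = (i = j)" using cls_uniq[of i j x] j i by blast
      ultimately show "chi x (E i) = (if i = j then 1 else 0)" by simp
    qed
    thus "chi x (1 - F) = 0" using j by (simp add: sum.delta' chi_diff chi_one)
  qed
  have "(1 - F) * (1 - F) = 1 - F" using FF by (simp add: algebra_simps)
  hence "1 - F = 0" by (rule idem_zero[OF Rtriv _ chi1F])
  hence "F = 1" by simp
  have fin: "(\<forall>j<p. E j * E j = E j \<and> (\<forall>x. chi x (E j) = (if cls x j then 1 else 0)))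
     \<and> (\<forall>i<p. \<forall>j<p. i \<noteq> j \<longrightarrow> E i * E j = 0) \<and> (\<Sum>j<p. E j) = 1"
    using all1 all2 \<open>F = 1\<close> unfolding F_def by blast
  thus ?thesis unfolding E_def Tf_def p_def cls_def .
qed


lemma MA_const: "MA (malg_const r) = cst r" by (simp add: cst_def)
lemma MA_Theta: "MA (Theta f) = th (MA f)" by (simp add: th_def)

theorem mainTheorem10:
  fixes S :: "'m::{monoid_mult,finite} set"
    and rs :: "'m list"
    and ls ks :: "nat \<Rightarrow> 'm list"
    and a b :: "nat \<Rightarrow> nat"
    and I :: "'i set"
    and \<epsilon> :: "'i \<Rightarrow> 'r::ring_1"
  assumes Rtriv: "R_trivial TYPE('m)"
    and gen: "generated S = UNIV"
    and reps_all: "LS S ` set rs = LS S ` UNIV"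
    and reps_dist: "distinct (map (LS S) rs)"
    and ls: "\<And>m. m < length rs \<Longrightarrow> distinct (ls m) \<and> set (ls m) = LS S (rs ! m)"
    and ks: "\<And>m. m < length rs \<Longrightarrow> distinct (ks m) \<and> set (ks m) = S - LS S (rs ! m)"
    and a: "\<And>m. m < length rs \<Longrightarrow>
              a m \<ge> card (UNIV :: 'm set) - card {\<sigma>. LS S \<sigma> = LS S (rs ! m)}"
    and b: "\<And>m. m < length rs \<Longrightarrow> b m \<ge> card {\<sigma>. LS S \<sigma> = LS S (rs ! m)}"
    and R_nontriv: "(1::'r) \<noteq> 0"
    and eps: "cpoi_ring I \<epsilon>"
  shows "cpoi_malg (I \<times> {..<length rs})
           (\<lambda>(i, j). malg_mult (malg_const (\<epsilon> i))
                        (Theta (algE (\<lambda>m. Tgen (ls m) (ks m)) a b j) :: ('m, 'r) malg))"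
proof -
  define Tf where "Tf = (\<lambda>m. Tgen (ls m) (ks m))"
  define E where "E = (\<lambda>j. MA (algE Tf a b j) :: ('m, int) MA)"
  define p where "p = length rs"
  define cls where "cls = (\<lambda>x j. LS S x = LS S (rs ! j))"
  define Eb where "Eb = (\<lambda>j. th (E j) :: ('m, 'r) MA)"
  define P where "P = (\<lambda>i j. cst (\<epsilon> i) * Eb j)"
  define G where "G = (\<lambda>(i, j). malg_mult (malg_const (\<epsilon> i))
                        (Theta (algE (\<lambda>m. Tgen (ls m) (ks m)) a b j) :: ('m, 'r) malg))"
  have AM: "(\<forall>j<p. E j * E j = E j \<and> (\<forall>x. chi x (E j) = (if cls x j then 1 else 0)))
     \<and> (\<forall>i<p. \<forall>j<p. i \<noteq> j \<longrightarrow> E i * E j = 0) \<and> (\<Sum>j<p. E j) = 1"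
    unfolding E_def Tf_def p_def cls_def by (rule alg_main[OF Rtriv gen reps_all reps_dist ls ks a b])
  have E1: "\<And>j. j < p \<Longrightarrow> E j * E j = E j" using AM by blast
  have Ec: "\<And>j x. j < p \<Longrightarrow> chi x (E j) = (if cls x j then 1 else 0)" using AM by blast
  have E2: "\<And>i j. i < p \<Longrightarrow> j < p \<Longrightarrow> i \<noteq> j \<Longrightarrow> E i * E j = 0" using AM by blast
  have E3: "(\<Sum>j<p. E j) = 1" using AM by blast
  have finI: "finite I" and eps1: "\<And>i. i \<in> I \<Longrightarrow> \<epsilon> i \<noteq> 0 \<and> \<epsilon> i * \<epsilon> i = \<epsilon> i \<and> primitive_idem_ring (\<epsilon> i)"
    and eps2: "\<And>i k. i \<in> I \<Longrightarrow> k \<in> I \<Longrightarrow> i \<noteq> k \<Longrightarrow> \<epsilon> i * \<epsilon> k = 0"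
    and eps3: "(\<Sum>i\<in>I. \<epsilon> i) = 1"
    using eps unfolding cpoi_ring_def by auto
  have GP: "MA (G (i, j)) = P i j" for i j
    unfolding G_def P_def Eb_def E_def Tf_def by (simp add: MA_mult MA_const MA_Theta)
  have Ebc: "chi x (Eb j) = (if cls x j then 1 else 0)" if "j < p" for x j
    unfolding Eb_def using Ec[OF that, of x] by (simp add: chi_th)
  have Eb1: "Eb j * Eb j = Eb j" if "j < p" for j
    unfolding Eb_def by (simp add: th_mult[symmetric] E1[OF that])
  have Eb2: "Eb i * Eb j = 0" if "i < p" "j < p" "i \<noteq> j" for i j
    unfolding Eb_def by (simp add: th_mult[symmetric] E2[OF that] th_zero)
  have Eb3: "(\<Sum>j<p. Eb j) = 1"
    unfolding Eb_def by (simp add: th_sum[symmetric] E3 th_one)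
  have Pmult: "P i j * P k l = cst (\<epsilon> i * \<epsilon> k) * (Eb j * Eb l)" for i j k l
  proof -
    have "P i j * P k l = cst (\<epsilon> i) * (Eb j * cst (\<epsilon> k)) * Eb l"
      unfolding P_def by (simp add: mult.assoc)
    also have "Eb j * cst (\<epsilon> k) = cst (\<epsilon> k) * Eb j" unfolding Eb_def by (rule cst_th_comm[symmetric])
    finally show ?thesis by (simp add: cst_mult mult.assoc)
  qed
  have chiP: "chi x (P i j) = \<epsilon> i * (if cls x j then 1 else 0)" if "j < p" for x i j
    unfolding P_def by (simp add: chi_mult[OF Rtriv] chi_cst Ebc[OF that])
  have Pidem: "P i j * P i j = P i j" if "i \<in> I" "j < p" for i j
    unfolding Pmult using eps1[OF that(1)] Eb1[OF that(2)] by (simp add: P_def)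
  have Porth: "P i j * P k l = 0" if "i \<in> I" "k \<in> I" "j < p" "l < p" "(i, j) \<noteq> (k, l)" for i j k l
  proof (cases "i = k")
    case True
    hence "j \<noteq> l" using that by simp
    thus ?thesis unfolding Pmult using Eb2[OF that(3,4)] by simp
  next
    case False
    thus ?thesis unfolding Pmult using eps2[OF that(1,2)] by (simp add: cst_zero)
  qed
  have Pnz: "P i j \<noteq> 0" if "i \<in> I" "j < p" for i j
  proof
    assume "P i j = 0"
    hence "chi (rs ! j) (P i j) = 0" by (simp add: chi_zero)
    thus False using chiP[OF that(2), of "rs ! j" i] eps1[OF that(1)] unfolding cls_def by simp
  qed
  have zero_part: "Z = 0" if ij: "i \<in> I" "j < p" and ZZ: "Z * Z = Z" and ZP: "Z * P i j = Z"
    and Zc: "chi (rs ! j) Z = 0" for i j Z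
  proof (rule idem_zero[OF Rtriv ZZ], intro allI)
    fix x
    show "chi x Z = 0"
    proof (cases "cls x j")
      case True
      have "chi x Z = chi (rs ! j) Z" using True unfolding cls_def by (rule chi_LS[OF Rtriv gen])
      thus ?thesis using Zc by simp
    next
      case False
      have "chi x Z = chi x (Z * P i j)" using ZP by simp
      also have "\<dots> = 0" using False by (simp add: chi_mult[OF Rtriv] chiP[OF ij(2)])
      finally show ?thesis .
    qed
  qed
  have Pprim: "X = 0 \<or> Y = 0" if ij: "i \<in> I" "j < p" and h: "P i j = X + Y" "X * X = X" "Y * Y = Y" "X * Y = 0" "Y * X = 0" for i j X Y
  proof -
    let ?c = "chi (rs ! j) :: ('m, 'r) MA \<Rightarrow> 'r"
    have ce: "?c (P i j) = \<epsilon> i" using chiP[OF ij(2), of "rs ! j" i] unfolding cls_def by simp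
    have "\<epsilon> i = ?c X + ?c Y" using ce h(1) by (simp add: chi_add)
    moreover have "?c X * ?c X = ?c X" using h(2) by (metis chi_mult[OF Rtriv])
    moreover have "?c Y * ?c Y = ?c Y" using h(3) by (metis chi_mult[OF Rtriv])
    moreover have "?c X * ?c Y = 0" using h(4) by (metis chi_mult[OF Rtriv] chi_zero)
    moreover have "?c Y * ?c X = 0" using h(5) by (metis chi_mult[OF Rtriv] chi_zero)
    ultimately have "?c X = 0 \<or> ?c Y = 0" using eps1[OF ij(1)] unfolding primitive_idem_ring_def by blast
    moreover have "X * P i j = X" using h by (simp add: distrib_left)
    moreover have "Y * P i j = Y" using h by (simp add: distrib_left)
    ultimately show ?thesis using zero_part[OF ij h(2)] zero_part[OF ij h(3)] by blast
  qed
  have Psum: "(\<Sum>q\<in>I \<times> {..<p}. MA (G q)) = 1"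
  proof -
    have "(\<Sum>q\<in>I \<times> {..<p}. MA (G q)) = (\<Sum>i\<in>I. \<Sum>j<p. P i j)"
    proof -
      have "(\<Sum>q\<in>I \<times> {..<p}. MA (G q)) = (\<Sum>q\<in>I \<times> {..<p}. P (fst q) (snd q))"
        by (intro sum.cong refl) (metis GP prod.collapse)
      thus ?thesis by (simp add: sum.cartesian_product case_prod_beta)
    qed
    also have "\<dots> = (\<Sum>i\<in>I. cst (\<epsilon> i) * (\<Sum>j<p. Eb j))"
      unfolding P_def by (simp only: sum_distrib_left)
    also have "\<dots> = (\<Sum>i\<in>I. cst (\<epsilon> i)) * (\<Sum>j<p. Eb j)"
      by (simp only: sum_distrib_right)
    also have "\<dots> = 1" by (simp add: cst_sum[symmetric] eps3 cst_one Eb3)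
    finally show ?thesis .
  qed
  have MAG: "G q = malg_zero \<longleftrightarrow> MA (G q) = 0" for q by (simp add: MA_zero[symmetric] MA_inj)
  show ?thesis
    unfolding G_def[symmetric] p_def[symmetric] cpoi_malg_def
  proof (intro conjI ballI)
    show "finite (I \<times> {..<p})" using finI by simp
  next
    fix q assume q: "q \<in> I \<times> {..<p}"
    then obtain i j where qij: "q = (i, j)" and ij: "i \<in> I" "j < p" by auto
    show "G q \<noteq> malg_zero" using Pnz[OF ij] unfolding MAG qij GP .
    show "malg_mult (G q) (G q) = G q"
      by (simp add: MA_inj[symmetric] MA_mult qij GP Pidem[OF ij])
    show "primitive_idem_malg (G q)"
      unfolding primitive_idem_malg_def
    proof (intro allI impI)
      fix X Y assume h: "G q = malg_add X Y \<and> malg_mult X X = X \<and> malg_mult Y Y = Y \<and>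
            malg_mult X Y = malg_zero \<and> malg_mult Y X = malg_zero"
      have "P i j = MA X + MA Y" "MA X * MA X = MA X" "MA Y * MA Y = MA Y" "MA X * MA Y = 0" "MA Y * MA X = 0"
        using h by (simp_all add: GP[symmetric] qij MA_add[symmetric] MA_mult[symmetric] MA_zero)
      hence "MA X = 0 \<or> MA Y = 0" by (rule Pprim[OF ij])
      thus "X = malg_zero \<or> Y = malg_zero" by (simp add: MA_zero[symmetric] MA_inj)
    qed
  next
    fix q1 assume q1: "q1 \<in> I \<times> {..<p}"
    fix q2 assume q2: "q2 \<in> I \<times> {..<p}"
    show "q1 \<noteq> q2 \<longrightarrow> malg_mult (G q1) (G q2) = malg_zero"
    proof
      assume ne: "q1 \<noteq> q2"
      obtain i j where 1: "q1 = (i, j)" "i \<in> I" "j < p" using q1 by auto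
      obtain k l where 2: "q2 = (k, l)" "k \<in> I" "l < p" using q2 by auto
      have "P i j * P k l = 0" using Porth[OF 1(2) 2(2) 1(3) 2(3)] ne 1(1) 2(1) by simp
      thus "malg_mult (G q1) (G q2) = malg_zero"
        by (simp add: MA_inj[symmetric] MA_mult MA_zero 1(1) 2(1) GP)
    qed
  next
    show "malg_sum G (I \<times> {..<p}) = malg_one"
      by (simp add: MA_inj[symmetric] MA_sum MA_one Psum)
  qed
qed

end
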